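(* Let $\{C_i\}$ be the square cells of a Cartesian grid, each of side length $\Delta x>0$, and let $\Delta t>0$ be a global time step. Suppose the cell averages of the water height at time $t^n$ satisfy $h_i^n\ge 0$ for all $i$. For every edge $E$ let a real number (numerical mass flux) be given, conservatively: if $E$ separates cells $C_i$ and $C_j$, denote by $\mathcal H_{E,i}$ the flux across $E$ measured with respect to the outward normal of $C_i$, so that $\mathcal H_{E,j}=-\mathcal H_{E,i}$. Define $\mathcal H^+_{E,i}:=\max\{\mathcal H_{E,i},0\}$, the draining time $$\Delta t_{C_i,\mathrm{drain}}:=\frac{\Delta x\,h_i^n}{\sum_{E\subset\partial C_i}\mathcal H^+_{E,i}}\qquad(\text{set to }+\infty\text{ if the denominator is }0),$$ and, for each edge $E$ with $\mathcal H_{E,i}>0$ for one of its two adjacent cells $C_i$ (the upwind cell $C^-(E):=C_i$), the edge time step $\Delta t_E:=\min\{\Delta t,\Delta t_{C^-(E),\mathrm{drain}}\}$; for edges with zero flux put $\Delta t_E:=\Delta t$. Then the water heights produced by the modified finite volume update $$h_i^{n+1}=h_i^n-\frac{1}{\Delta x}\sum_{E\subset\partial C_i}\Delta t_E\,\mathcal H_{E,i}$$ satisfy $h_i^{n+1}\ge 0$ for every cell $C_i$.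
   Context: This is the first (water-height) component of a conservative finite volume scheme for the shallow water equations $h_t+\nabla\cdot(h\vec v)=0$, $(h\vec v)_t+\nabla\cdot(h\vec v\otimes\vec v+\tfrac g2h^2I)=-gh\nabla b$, written in the form $\mathbf u_i^{n+1}=\mathbf u_i^n-\frac{\Delta t}{\Delta x}\big(\sum_{E\subset\partial C_i}\mathcal F_E+\mathcal S_i\big)$, where $\mathcal F_E$ is an arbitrary numerical edge flux (averaged over the edge length and time step) and the first component of $\mathcal S_i$ is zero; $\mathcal H_{E,i}$ is the first component of $\mathcal F_E$ oriented outward from $C_i$. The modification replaces, edge by edge, the global time step $\Delta t$ multiplying the flux by the cut-off step $\Delta t_E$ (equivalently, the outgoing flux of a cell is set to zero after its draining time), while the solution is still advanced by the global step $\Delta t$. *)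

theory Defs
  imports Main "HOL-Library.Extended_Real"
begin

text \<open>Cartesian grid: cells are indexed by integer pairs (i,j).
  Edges: VE i j is the vertical edge between cells (i,j) and (i+1,j);
  HE i j is the horizontal edge between cells (i,j) and (i,j+1).\<close>

type_synonym cell = "int \<times> int"

datatype edge = VE int int | HE int int

fun low_cell :: "edge \<Rightarrow> cell" where
  "low_cell (VE i j) = (i, j)"
| "low_cell (HE i j) = (i, j)"

fun up_cell :: "edge \<Rightarrow> cell" where
  "up_cell (VE i j) = (i + 1, j)"
| "up_cell (HE i j) = (i, j + 1)"

fun cell_edges :: "cell \<Rightarrow> edge set" where
  "cell_edges (i, j) = {VE i j, VE (i - 1) j, HE i j, HE i (j - 1)}"

text \<open>A numerical mass flux is one real number F E per edge, measured w.r.t. the normal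
  pointing from low_cell E to up_cell E.  The flux of edge E oriented outward from cell c
  (\<open>H_{E,c}\<close>); conservation \<open>H_{E,j} = - H_{E,i}\<close> holds by construction.\<close>
definition Hout :: "(edge \<Rightarrow> real) \<Rightarrow> edge \<Rightarrow> cell \<Rightarrow> real" where
  "Hout F E c = (if c = low_cell E then F E else if c = up_cell E then - F E else 0)"

definition drain_time :: "real \<Rightarrow> (cell \<Rightarrow> real) \<Rightarrow> (edge \<Rightarrow> real) \<Rightarrow> cell \<Rightarrow> ereal" where
  "drain_time dx h F c =
     (let D = (\<Sum>E\<in>cell_edges c. max (Hout F E c) 0)
      in if D = 0 then \<infinity> else ereal (dx * h c / D))"

definition edge_dt :: "real \<Rightarrow> real \<Rightarrow> (cell \<Rightarrow> real) \<Rightarrow> (edge \<Rightarrow> real) \<Rightarrow> edge \<Rightarrow> real" where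
  "edge_dt dx dt h F E =
     (if Hout F E (low_cell E) > 0 then real_of_ereal (min (ereal dt) (drain_time dx h F (low_cell E)))
      else if Hout F E (up_cell E) > 0 then real_of_ereal (min (ereal dt) (drain_time dx h F (up_cell E)))
      else dt)"

definition h_new :: "real \<Rightarrow> real \<Rightarrow> (cell \<Rightarrow> real) \<Rightarrow> (edge \<Rightarrow> real) \<Rightarrow> cell \<Rightarrow> real" where
  "h_new dx dt h F c = h c - (1 / dx) * (\<Sum>E\<in>cell_edges c. edge_dt dx dt h F E * Hout F E c)"

end

theory Submission
  imports Defs
begin

lemma D_nonneg: "(\<Sum>E\<in>cell_edges c. max (Hout F E c) 0) \<ge> 0"
  by (rule sum_nonneg) simp

lemma min_drain:
  assumes "dx > 0" "dt > 0" "\<forall>c. h c \<ge> 0"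
  shows "0 \<le> real_of_ereal (min (ereal dt) (drain_time dx h F c))
     \<and> (\<forall>D. D = (\<Sum>E\<in>cell_edges c. max (Hout F E c) 0) \<longrightarrow> D \<noteq> 0 \<longrightarrow>
          real_of_ereal (min (ereal dt) (drain_time dx h F c)) \<le> dx * h c / D)"
proof -
  define D where "D = (\<Sum>E\<in>cell_edges c. max (Hout F E c) 0)"
  have D0: "D \<ge> 0" unfolding D_def by (rule D_nonneg)
  show ?thesis
  proof (cases "D = 0")
    case True
    then show ?thesis using assms by (simp add: drain_time_def D_def[symmetric] Let_def)
  next
    case False
    have "dx * h c / D \<ge> 0" using assms(1) assms(3)[rule_format, of c] D0 by simp
    then show ?thesis using assms False
      by (simp add: drain_time_def Let_def D_def[symmetric] min_def)
  qed
qed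

lemma edge_dt_nonneg:
  assumes "dx > 0" "dt > 0" "\<forall>c. h c \<ge> 0"
  shows "edge_dt dx dt h F E \<ge> 0"
  using min_drain[OF assms] assms unfolding edge_dt_def by auto

lemma low_ne_up: "low_cell E \<noteq> up_cell E"
  by (cases E) auto

lemma edge_dt_up:
  assumes "Hout F E c > 0"
  shows "edge_dt dx dt h F E = real_of_ereal (min (ereal dt) (drain_time dx h F c))"
proof -
  have c: "c = low_cell E \<or> c = up_cell E"
    using assms by (auto simp: Hout_def split: if_splits)
  show ?thesis
  proof (cases "c = low_cell E")
    case True then show ?thesis using assms by (simp add: edge_dt_def)
  next
    case False
    then have "c = up_cell E" using c by simp
    then have "F E < 0" using assms low_ne_up[of E] by (auto simp: Hout_def)
    then have "\<not> Hout F E (low_cell E) > 0" by (simp add: Hout_def)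
    then show ?thesis using assms \<open>c = up_cell E\<close> by (simp add: edge_dt_def)
  qed
qed

theorem mainTheorem1:
  fixes dx dt :: real and h :: "cell \<Rightarrow> real" and F :: "edge \<Rightarrow> real"
  assumes "dx > 0" and "dt > 0" and "\<forall>c. h c \<ge> 0"
  shows "\<forall>c. h_new dx dt h F c \<ge> 0"
proof
  fix c
  define D where "D = (\<Sum>E\<in>cell_edges c. max (Hout F E c) 0)"
  have D0: "D \<ge> 0" unfolding D_def by (rule D_nonneg)
  have sumle: "(\<Sum>E\<in>cell_edges c. edge_dt dx dt h F E * Hout F E c) \<le> dx * h c"
  proof (cases "D = 0")
    case True
    have "(\<Sum>E\<in>cell_edges c. edge_dt dx dt h F E * Hout F E c) \<le> (\<Sum>E\<in>cell_edges c. 0)"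
    proof (rule sum_mono)
      fix E assume E: "E \<in> cell_edges c"
      have "max (Hout F E c) 0 = 0"
      proof -
        have fin: "finite (cell_edges c)" by (cases c) simp
        have "\<forall>x\<in>cell_edges c. max (Hout F x c) 0 = 0"
          using True fin by (subst sum_nonneg_eq_0_iff[symmetric]) (auto simp: D_def)
        then show ?thesis using E by blast
      qed
      then have "Hout F E c \<le> 0" by simp
      then show "edge_dt dx dt h F E * Hout F E c \<le> 0"
        using edge_dt_nonneg[OF assms] by (simp add: mult_nonneg_nonpos)
    qed
    moreover have "dx * h c \<ge> 0" using assms(1) assms(3)[rule_format, of c] by simp
    ultimately show ?thesis by simp
  next
    case False
    have "(\<Sum>E\<in>cell_edges c. edge_dt dx dt h F E * Hout F E c)
        \<le> (\<Sum>E\<in>cell_edges c. (dx * h c / D) * max (Hout F E c) 0)"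
    proof (rule sum_mono)
      fix E assume E: "E \<in> cell_edges c"
      show "edge_dt dx dt h F E * Hout F E c \<le> (dx * h c / D) * max (Hout F E c) 0"
      proof (cases "Hout F E c > 0")
        case True
        have "edge_dt dx dt h F E \<le> dx * h c / D"
          using edge_dt_up[OF True] min_drain[OF assms, of F c] False D_def by auto
        then have "edge_dt dx dt h F E * Hout F E c \<le> (dx * h c / D) * Hout F E c"
          using True by (intro mult_right_mono) auto
        then show ?thesis using True by (simp add: max_def)
      next
        case f: False
        have "dx * h c / D \<ge> 0" using assms(1) assms(3)[rule_format, of c] D0 by simp
        have "edge_dt dx dt h F E * Hout F E c \<le> 0"
          using f edge_dt_nonneg[OF assms, of F E] by (intro mult_nonneg_nonpos) auto
        then show ?thesis using f by (simp add: max_def)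
      qed
    qed
    also have "\<dots> = (dx * h c / D) * D" by (simp add: D_def sum_distrib_left)
    also have "\<dots> = dx * h c" using False by simp
    finally show ?thesis .
  qed
  have "(1 / dx) * (\<Sum>E\<in>cell_edges c. edge_dt dx dt h F E * Hout F E c) \<le> (1/dx) * (dx * h c)"
    using sumle assms(1) by (intro mult_left_mono) auto
  also have "\<dots> = h c" using assms by simp
  finally have "(1 / dx) * (\<Sum>E\<in>cell_edges c. edge_dt dx dt h F E * Hout F E c) \<le> h c" .
  then show "h_new dx dt h F c \<ge> 0" unfolding h_new_def by linarith
qed

end
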